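(* Let $L$ be a Lie algebra over a field of characteristic $\neq 2$, $U(L)$ its (associative) universal enveloping algebra with Hopf comultiplication $\Delta$, let $r=q^{-1}$ where $q\colon U(L)\to U(L)$, $q(x)=\sum x_{(1)}x_{(2)}$, and define a new product on $U(L)$ by $x*y=\sum r(x_{(1)})\,y\,r(x_{(2)})$. Then: (i) $\sum x_{(1)}*(y*(x_{(2)}*z))=\sum (x_{(1)}*(y*x_{(2)}))*z$ for all $x,y,z\in U(L)$; (ii) $a*b=b*a$ for all $a,b\in L$; (iii) $a*(b*c)-b*(a*c)=\tfrac14[[a,b],c]$ for all $a,b,c\in L$.
   Context: $U(L)$ is a Hopf algebra with $\Delta(a)=a\otimes1+1\otimes a$ for $a\in L$, Sweedler notation $\Delta(x)=\sum x_{(1)}\otimes x_{(2)}$. The linear map $q(x)=\sum x_{(1)}x_{(2)}$ is bijective (it preserves the PBW filtration and acts as multiplication by $2^n$ on the $n$-th graded piece), so $r=q^{-1}$ is well defined; $r$ is a coalgebra isomorphism and $x=\sum r(x_{(1)})r(x_{(2)})$. *)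

theory Defs
  imports Complex_Main "HOL-Library.Poly_Mapping"
begin

definition lie_algebra :: "('k::field \<Rightarrow> 'l::ab_group_add \<Rightarrow> 'l) \<Rightarrow> ('l \<Rightarrow> 'l \<Rightarrow> 'l) \<Rightarrow> bool" where
  "lie_algebra scale br \<longleftrightarrow> vector_space scale \<and>
     (\<forall>a b c. br (a + b) c = br a c + br b c) \<and>
     (\<forall>a b c. br a (b + c) = br a b + br a c) \<and>
     (\<forall>k a b. br (scale k a) b = scale k (br a b)) \<and>
     (\<forall>k a b. br a (scale k b) = scale k (br a b)) \<and>
     (\<forall>a. br a a = 0) \<and>
     (\<forall>a b c. br a (br b c) + br b (br c a) + br c (br a b) = 0)"

text \<open>Free associative unital algebra over 'k on the set 'l: finitely supported
 functions on words.\<close>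
type_synonym ('l, 'k) fa = "'l list \<Rightarrow>\<^sub>0 'k"

definition fa_smult :: "'k::field \<Rightarrow> ('l, 'k) fa \<Rightarrow> ('l, 'k) fa" where
  "fa_smult c p = Poly_Mapping.map (\<lambda>x. c * x) p"

definition fa_mult :: "('l, 'k::field) fa \<Rightarrow> ('l, 'k) fa \<Rightarrow> ('l, 'k) fa" where
  "fa_mult p q = (\<Sum>u\<in>Poly_Mapping.keys p. \<Sum>v\<in>Poly_Mapping.keys q. Poly_Mapping.single (u @ v) (Poly_Mapping.lookup p u * Poly_Mapping.lookup q v))"

definition fa_word :: "'l list \<Rightarrow> ('l, 'k::field) fa" where
  "fa_word w = Poly_Mapping.single w 1"

definition fa_gen :: "'l \<Rightarrow> ('l, 'k::field) fa" where
  "fa_gen a = fa_word [a]"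

text \<open>Two-sided ideal defining U(L) = free algebra on L modulo linearity
 relations and ab - ba - [a,b].\<close>
inductive_set uea_ideal :: "('k::field \<Rightarrow> 'l::ab_group_add \<Rightarrow> 'l) \<Rightarrow> ('l \<Rightarrow> 'l \<Rightarrow> 'l) \<Rightarrow> ('l, 'k) fa set"
  for scale br where
  rel_add: "fa_gen (a + b) - fa_gen a - fa_gen b \<in> uea_ideal scale br"
| rel_smult: "fa_gen (scale c a) - fa_smult c (fa_gen a) \<in> uea_ideal scale br"
| rel_br: "fa_mult (fa_gen a) (fa_gen b) - fa_mult (fa_gen b) (fa_gen a) - fa_gen (br a b) \<in> uea_ideal scale br"
| zero: "0 \<in> uea_ideal scale br"
| add: "p \<in> uea_ideal scale br \<Longrightarrow> q \<in> uea_ideal scale br \<Longrightarrow> p + q \<in> uea_ideal scale br"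
| smult: "p \<in> uea_ideal scale br \<Longrightarrow> fa_smult c p \<in> uea_ideal scale br"
| lmult: "p \<in> uea_ideal scale br \<Longrightarrow> fa_mult q p \<in> uea_ideal scale br"
| rmult: "p \<in> uea_ideal scale br \<Longrightarrow> fa_mult p q \<in> uea_ideal scale br"

definition ueq :: "('k::field \<Rightarrow> 'l::ab_group_add \<Rightarrow> 'l) \<Rightarrow> ('l \<Rightarrow> 'l \<Rightarrow> 'l) \<Rightarrow> ('l, 'k) fa \<Rightarrow> ('l, 'k) fa \<Rightarrow> bool" where
  "ueq scale br p q \<longleftrightarrow> p - q \<in> uea_ideal scale br"

text \<open>Sweedler sum  sum f(x_(1), x_(2))  for the coproduct with
 Delta(a) = a (x) 1 + 1 (x) a, computed on a representative:
 Delta(a_1...a_n) = sum over S of a_S (x) a_(complement S), order preserved.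
 (Well defined on U(L) for f bilinear and compatible with the ideal.)\<close>
definition sweedler :: "('l, 'k::field) fa \<Rightarrow> (('l, 'k) fa \<Rightarrow> ('l, 'k) fa \<Rightarrow> ('l, 'k) fa) \<Rightarrow> ('l, 'k) fa" where
  "sweedler x f = (\<Sum>w\<in>Poly_Mapping.keys x. fa_smult (Poly_Mapping.lookup x w)
      (\<Sum>S\<in>Pow {..<length w}. f (fa_word (nths w S)) (fa_word (nths w ({..<length w} - S)))))"

definition uq :: "('l, 'k::field) fa \<Rightarrow> ('l, 'k) fa" where
  "uq x = sweedler x fa_mult"

text \<open>r = q^{-1} on U(L) (q is bijective on U(L)).\<close>
definition ur :: "('k::field \<Rightarrow> 'l::ab_group_add \<Rightarrow> 'l) \<Rightarrow> ('l \<Rightarrow> 'l \<Rightarrow> 'l) \<Rightarrow> ('l, 'k) fa \<Rightarrow> ('l, 'k) fa" where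
  "ur scale br x = (SOME p. ueq scale br (uq p) x)"

definition ustar :: "('k::field \<Rightarrow> 'l::ab_group_add \<Rightarrow> 'l) \<Rightarrow> ('l \<Rightarrow> 'l \<Rightarrow> 'l) \<Rightarrow> ('l, 'k) fa \<Rightarrow> ('l, 'k) fa \<Rightarrow> ('l, 'k) fa" where
  "ustar scale br x y = sweedler x (\<lambda>u v. fa_mult (fa_mult (ur scale br u) y) (ur scale br v))"

end

theory Submission
  imports Defs
begin

lemma lookup_fa_smult[simp]: "Poly_Mapping.lookup (fa_smult c p) k = c * Poly_Mapping.lookup p k"
  unfolding fa_smult_def by (simp add: Poly_Mapping.map.rep_eq when_def)

lemma fa_smult_add: "fa_smult c (p + q) = fa_smult c p + fa_smult c q"
  by (simp add: poly_mapping_eq_iff fun_eq_iff lookup_add algebra_simps)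
lemma fa_smult_add_left: "fa_smult (c + d) p = fa_smult c p + fa_smult d p"
  by (simp add: poly_mapping_eq_iff fun_eq_iff lookup_add algebra_simps)
lemma fa_smult_zero[simp]: "fa_smult c 0 = 0"
  by (simp add: poly_mapping_eq_iff fun_eq_iff)
lemma fa_smult_zero_left[simp]: "fa_smult 0 p = 0"
  by (simp add: poly_mapping_eq_iff fun_eq_iff)
lemma fa_smult_one[simp]: "fa_smult 1 p = p"
  by (simp add: poly_mapping_eq_iff fun_eq_iff)
lemma fa_smult_smult[simp]: "fa_smult c (fa_smult d p) = fa_smult (c*d) p"
  by (simp add: poly_mapping_eq_iff fun_eq_iff)
lemma fa_smult_minus: "fa_smult c (p - q) = fa_smult c p - fa_smult c q"
  by (simp add: poly_mapping_eq_iff fun_eq_iff lookup_minus algebra_simps)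
lemma fa_smult_uminus: "fa_smult c (- q) = - fa_smult c q"
  by (simp add: poly_mapping_eq_iff fun_eq_iff algebra_simps)
lemma fa_smult_m1: "fa_smult (-1) q = - q"
  by (simp add: poly_mapping_eq_iff fun_eq_iff algebra_simps)
lemma fa_smult_sum: "fa_smult c (sum f A) = (\<Sum>a\<in>A. fa_smult c (f a))"
  by (induct A rule: infinite_finite_induct) (auto simp: fa_smult_add)
lemma fa_smult_single: "fa_smult c (Poly_Mapping.single k d) = Poly_Mapping.single k (c * d)"
  by (simp add: poly_mapping_eq_iff fun_eq_iff lookup_single when_def)
lemma keys_fa_smult: "Poly_Mapping.keys (fa_smult c p) \<subseteq> Poly_Mapping.keys p"
  by (auto simp: in_keys_iff)

definition lin :: "('l list \<Rightarrow> ('l,'k::field) fa) \<Rightarrow> ('l,'k) fa \<Rightarrow> ('l,'k) fa" where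
  "lin g p = (\<Sum>w\<in>Poly_Mapping.keys p. fa_smult (Poly_Mapping.lookup p w) (g w))"

lemma lin_superset: "finite A \<Longrightarrow> Poly_Mapping.keys p \<subseteq> A \<Longrightarrow>
   lin g p = (\<Sum>w\<in>A. fa_smult (Poly_Mapping.lookup p w) (g w))"
  unfolding lin_def by (rule sum.mono_neutral_left) (auto simp: in_keys_iff)

lemma lin_add: "lin g (p + q) = lin g p + lin g q"
proof -
  let ?A = "Poly_Mapping.keys p \<union> Poly_Mapping.keys q"
  have f: "finite ?A" by simp
  show ?thesis
    using keys_add[of p q]
    by (simp add: lin_superset[OF f] lookup_add fa_smult_add_left sum.distrib)
qed

lemma lin_smult: "lin g (fa_smult c p) = fa_smult c (lin g p)"
proof -
  have "lin g (fa_smult c p) = (\<Sum>w\<in>Poly_Mapping.keys p. fa_smult (Poly_Mapping.lookup (fa_smult c p) w) (g w))"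
    by (rule lin_superset[OF finite_keys keys_fa_smult])
  then show ?thesis by (simp add: lin_def fa_smult_sum)
qed

lemma lin_zero[simp]: "lin g 0 = 0" by (simp add: lin_def)

lemma lin_uminus: "lin g (- p) = - lin g p"
  by (metis fa_smult_m1 lin_smult)
lemma lin_diff: "lin g (p - q) = lin g p - lin g q"
  by (simp only: diff_conv_add_uminus lin_add lin_uminus)

lemma lin_single: "lin g (Poly_Mapping.single w c) = fa_smult c (g w)"
  by (simp add: lin_def)

lemma lin_word[simp]: "lin g (fa_word w) = g w"
  by (simp add: fa_word_def lin_single)

lemma lin_id: "lin fa_word p = p"
  by (simp add: lin_def fa_word_def fa_smult_single poly_mapping_eq_iff fun_eq_iff lookup_sum
      lookup_single when_def in_keys_iff)

lemma lin_fadd: "lin (\<lambda>w. g w + h w) p = lin g p + lin h p"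
  by (simp add: lin_def fa_smult_add sum.distrib)
lemma lin_fzero[simp]: "lin (\<lambda>w. 0) p = 0"
  by (simp add: lin_def)
lemma lin_fsmult: "lin (\<lambda>w. fa_smult c (g w)) p = fa_smult c (lin g p)"
  by (simp add: lin_def fa_smult_sum mult_ac)
lemma lin_fdiff: "lin (\<lambda>w. g w - h w) p = lin g p - lin h p"
  by (simp add: lin_def fa_smult_minus sum_subtractf)
lemma lin_fsum: "lin (\<lambda>w. \<Sum>i\<in>S. g i w) p = (\<Sum>i\<in>S. lin (g i) p)"
  by (induct S rule: infinite_finite_induct) (auto simp: lin_fadd)
lemma lin_cong: "(\<And>w. w \<in> Poly_Mapping.keys p \<Longrightarrow> g w = h w) \<Longrightarrow> lin g p = lin h p"
  by (simp add: lin_def)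

definition linmap :: "(('l,'k::field) fa \<Rightarrow> ('l,'k) fa) \<Rightarrow> bool" where
  "linmap f \<longleftrightarrow> (\<forall>p q. f (p + q) = f p + f q) \<and> (\<forall>c p. f (fa_smult c p) = fa_smult c (f p))"

lemma linmapD_aux: assumes "linmap f" shows "\<And>p q. f (p + q) = f p + f q" "\<And>c p. f (fa_smult c p) = fa_smult c (f p)"
  using assms by (auto simp: linmap_def)

lemma linmapD: assumes "linmap f" shows "f (p + q) = f p + f q" "f (fa_smult c p) = fa_smult c (f p)"
  "f 0 = 0" "f (sum g A) = (\<Sum>a\<in>A. f (g a))" "f (- p) = - f p" "f (p - q) = f p - f q"
proof -
  note a = linmapD_aux[OF assms]
  show "f (p + q) = f p + f q" "f (fa_smult c p) = fa_smult c (f p)" by (rule a(1), rule a(2))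
  have z: "f 0 = 0" using a(2)[of 0 0] by simp
  then show "f 0 = 0" .
  show "f (sum g A) = (\<Sum>a\<in>A. f (g a))"
  proof (induct A rule: infinite_finite_induct)
    case (insert x F) then show ?case by (simp add: a(1))
  qed (auto simp: z)
  have n: "f (- p) = - f p" for p using a(2)[of "-1" p] by (simp add: fa_smult_m1)
  then show "f (- p) = - f p" .
  show "f (p - q) = f p - f q"
    using a(1)[of p "-q"] n[of q] by (simp only: diff_conv_add_uminus)
qed

lemma lin_hom: "linmap f \<Longrightarrow> f (lin g p) = lin (\<lambda>w. f (g w)) p"
  by (simp add: lin_def linmapD)

lemma linmap_lin: "linmap (lin g)"
  by (simp add: linmap_def lin_add lin_smult)

lemma lin_swap: "lin (\<lambda>u. lin (h u) q) p = lin (\<lambda>v. lin (\<lambda>u. h u v) p) q"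
  unfolding lin_def by (simp add: fa_smult_sum sum.swap[of _ "Poly_Mapping.keys p"] mult_ac)

lemma fa_mult_lin: "fa_mult p q = lin (\<lambda>u. lin (\<lambda>v. fa_word (u @ v)) q) p"
  unfolding fa_mult_def lin_def by (simp add: fa_smult_sum fa_word_def fa_smult_single)


fun D :: "'l list \<Rightarrow> ('l list \<Rightarrow> 'l list \<Rightarrow> 'b::comm_monoid_add) \<Rightarrow> 'b" where
  "D [] f = f [] []"
| "D (a # w) f = D w (\<lambda>u v. f (a # u) v) + D w (\<lambda>u v. f u (a # v))"

lemma sum_Pow_Suc:
  "(\<Sum>S\<in>Pow {..<Suc n}. F S) = (\<Sum>T\<in>Pow {..<n}. F (Suc ` T)) + (\<Sum>T\<in>Pow {..<n}. F (insert 0 (Suc ` T)))"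
proof -
  have e: "Pow {..<Suc n} = (image Suc) ` Pow {..<n} \<union> (\<lambda>T. insert 0 (Suc ` T)) ` Pow {..<n}"
  proof -
    have p: "Pow (Suc ` {..<n}) = image Suc ` Pow {..<n}" by (rule image_Pow_surj[symmetric]) (rule refl)
    show ?thesis unfolding lessThan_Suc_eq_insert_0 Pow_insert p by (simp add: image_image)
  qed
  have d: "(image Suc) ` Pow {..<n} \<inter> (\<lambda>T. insert 0 (Suc ` T)) ` Pow {..<n} = {}" by auto
  have i1: "inj_on (image Suc) (Pow {..<n})" by (rule inj_on_image_Pow) simp
  have i2: "inj_on (\<lambda>T. insert 0 (Suc ` T)) (Pow {..<n})"
  proof (rule inj_onI)
    fix X Y assume "insert 0 (Suc ` X) = insert (0::nat) (Suc ` Y)"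
    then have "Suc ` X = Suc ` Y" by auto
    then show "X = Y" by (simp add: inj_image_eq_iff)
  qed
  show ?thesis unfolding e
    by (subst sum.union_disjoint) (auto simp: d sum.reindex[OF i1] sum.reindex[OF i2])
qed

lemma nths_Cons_Suc: "nths (a # w) (Suc ` T) = nths w T"
  by (simp add: nths_Cons image_iff)
lemma nths_Cons_ins0: "nths (a # w) (insert 0 (Suc ` T)) = a # nths w T"
  by (simp add: nths_Cons image_iff)

lemma D_sweed: "(\<Sum>S\<in>Pow {..<length w}. f (nths w S) (nths w ({..<length w} - S))) = D w f"
proof (induct w arbitrary: f)
  case Nil then show ?case by simp
next
  case (Cons a w)
  let ?n = "length w"
  have c1: "{..<Suc ?n} - Suc ` T = insert 0 (Suc ` ({..<?n} - T))" if "T \<subseteq> {..<?n}" for T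
    using that unfolding lessThan_Suc_eq_insert_0 by auto
  have c2: "{..<Suc ?n} - insert 0 (Suc ` T) = Suc ` ({..<?n} - T)" if "T \<subseteq> {..<?n}" for T
    using that unfolding lessThan_Suc_eq_insert_0 by auto
  have "(\<Sum>S\<in>Pow {..<length (a # w)}. f (nths (a # w) S) (nths (a # w) ({..<length (a # w)} - S)))
     = (\<Sum>T\<in>Pow {..<?n}. f (nths w T) (a # nths w ({..<?n} - T))) +
       (\<Sum>T\<in>Pow {..<?n}. f (a # nths w T) (nths w ({..<?n} - T)))"
    by (simp only: length_Cons sum_Pow_Suc, intro arg_cong2[where f="(+)"] sum.cong)
       (auto simp: c1 c2 nths_Cons_Suc nths_Cons_ins0)
  also have "\<dots> = D (a # w) f" using Cons[of "\<lambda>u v. f u (a # v)"] Cons[of "\<lambda>u v. f (a # u) v"]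
    by (simp add: add.commute)
  finally show ?case .
qed

lemma sweedler_D: "sweedler x f = lin (\<lambda>w. D w (\<lambda>u v. f (fa_word u) (fa_word v))) x"
  unfolding sweedler_def lin_def using D_sweed[where f="\<lambda>u v. f (fa_word u) (fa_word v)"] by simp

lemma D_add: "D w (\<lambda>u v. f u v + g u v) = D w f + D w g"
  by (induct w arbitrary: f g) (simp_all add: add_ac)
lemma D_zero[simp]: "D w (\<lambda>u v. 0) = 0"
  by (induct w) simp_all
lemma D_hom: assumes "\<And>x y. h (x + y) = h x + h y" "h 0 = 0"
  shows "h (D w f) = D w (\<lambda>u v. h (f u v))"
  by (induct w arbitrary: f) (simp_all add: assms)
lemma D_comm: "D w f = D w (\<lambda>u v. f v u)"
proof (induct w arbitrary: f)
  case (Cons a w)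
  show ?case using Cons[of "\<lambda>u v. f (a#u) v"] Cons[of "\<lambda>u v. f u (a#v)"] by (simp add: add.commute)
qed simp
lemma D_assoc: "D w (\<lambda>u v. D u (\<lambda>a b. g a b v)) = D w (\<lambda>u v. D v (\<lambda>c d. g u c d))"
  by (induct w arbitrary: g) (simp_all add: D_add add_ac)
lemma D_append: "D (u @ v) f = D u (\<lambda>u1 u2. D v (\<lambda>v1 v2. f (u1 @ v1) (u2 @ v2)))"
  by (induct u arbitrary: f) (simp_all add: D_add)
lemma D_closed: assumes "0 \<in> S" "\<And>x y. x \<in> S \<Longrightarrow> y \<in> S \<Longrightarrow> x + y \<in> S"
  shows "(\<And>u v. length u + length v = length w \<Longrightarrow> f u v \<in> S) \<Longrightarrow> D w f \<in> S"
proof (induct w arbitrary: f)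
  case Nil then show ?case by simp
next
  case (Cons a w)
  show ?case
    by (simp, rule assms(2); rule Cons(1); simp add: Cons(2))
qed
lemma D_single: "D [a] f = f [a] [] + f [] [a]" by simp

definition D4 where "D4 w F = D w (\<lambda>u v. D u (\<lambda>a b. D v (\<lambda>c d. F a b c d)))"

lemma D4_Cons: "D4 (x # w) F = D4 w (\<lambda>a b c d. F (x # a) b c d) + D4 w (\<lambda>a b c d. F a (x # b) c d)
   + D4 w (\<lambda>a b c d. F a b (x # c) d) + D4 w (\<lambda>a b c d. F a b c (x # d))"
  unfolding D4_def by (simp add: D_add add_ac)

lemma D4_swap23: "D4 w F = D4 w (\<lambda>a b c d. F a c b d)"
proof (induct w arbitrary: F)
  case Nil then show ?case by (simp add: D4_def)
next
  case (Cons x w)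
  show ?case unfolding D4_Cons
    using Cons[of "\<lambda>a b c d. F (x # a) b c d"] Cons[of "\<lambda>a b c d. F a (x # b) c d"]
      Cons[of "\<lambda>a b c d. F a b (x # c) d"] Cons[of "\<lambda>a b c d. F a b c (x # d)"]
    by (simp add: add_ac)
qed

lemma D4_swap24: "D4 w F = D4 w (\<lambda>a b c d. F a d c b)"
proof (induct w arbitrary: F)
  case Nil then show ?case by (simp add: D4_def)
next
  case (Cons x w)
  show ?case unfolding D4_Cons
    using Cons[of "\<lambda>a b c d. F (x # a) b c d"] Cons[of "\<lambda>a b c d. F a (x # b) c d"]
      Cons[of "\<lambda>a b c d. F a b (x # c) d"] Cons[of "\<lambda>a b c d. F a b c (x # d)"]
    by (simp add: add_ac)
qed

lemma D_lin: "D w (\<lambda>u v. lin (h u v) q) = lin (\<lambda>t. D w (\<lambda>u v. h u v t)) q"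
  by (induct w arbitrary: h) (simp_all add: lin_fadd)

lemma linmap_D: "linmap f \<Longrightarrow> f (D w g) = D w (\<lambda>u v. f (g u v))"
  by (rule D_hom) (simp_all add: linmapD)

lemma M_word: "fa_mult (fa_word u) (fa_word v) = fa_word (u @ v)"
  by (simp add: fa_mult_lin)
lemma M_lin1: "fa_mult p q = lin (\<lambda>u. fa_mult (fa_word u) q) p"
  by (simp add: fa_mult_lin)
lemma M_lin2: "fa_mult p q = lin (\<lambda>v. fa_mult p (fa_word v)) q"
  by (simp add: fa_mult_lin lin_swap[of _ q p])
lemma linmap_M1: "linmap (\<lambda>p. fa_mult p q)"
  by (subst M_lin1[abs_def]) (rule linmap_lin)
lemma linmap_M2: "linmap (\<lambda>q. fa_mult p q)"
  by (subst M_lin2[abs_def]) (rule linmap_lin)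

lemmas M_add1 = linmapD(1)[OF linmap_M1] and M_smult1 = linmapD(2)[OF linmap_M1]
  and M_zero1 = linmapD(3)[OF linmap_M1] and M_sum1 = linmapD(4)[OF linmap_M1]
  and M_uminus1 = linmapD(5)[OF linmap_M1] and M_diff1 = linmapD(6)[OF linmap_M1]
lemmas M_add2 = linmapD(1)[OF linmap_M2] and M_smult2 = linmapD(2)[OF linmap_M2]
  and M_zero2 = linmapD(3)[OF linmap_M2] and M_sum2 = linmapD(4)[OF linmap_M2]
  and M_uminus2 = linmapD(5)[OF linmap_M2] and M_diff2 = linmapD(6)[OF linmap_M2]

lemma M_one1[simp]: "fa_mult (fa_word []) p = p"
  by (simp add: fa_mult_lin lin_id)
lemma M_one2[simp]: "fa_mult p (fa_word []) = p"
  by (simp add: fa_mult_lin lin_id)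

lemma M_assoc: "fa_mult (fa_mult p q) s = fa_mult p (fa_mult q s)"
  by (simp add: fa_mult_lin lin_hom[OF linmap_lin])

lemma M_D1: "fa_mult (D w f) q = D w (\<lambda>u v. fa_mult (f u v) q)"
  by (rule linmap_D[OF linmap_M1])
lemma M_D2: "fa_mult p (D w f) = D w (\<lambda>u v. fa_mult p (f u v))"
  by (rule linmap_D[OF linmap_M2])
lemma M_lin1': "fa_mult (lin g p) q = lin (\<lambda>w. fa_mult (g w) q) p"
  by (rule lin_hom[OF linmap_M1])
lemma M_lin2': "fa_mult q (lin g p) = lin (\<lambda>w. fa_mult q (g w)) p"
  by (rule lin_hom[OF linmap_M2])


lemma Sw_word: "sweedler (fa_word w) f = D w (\<lambda>u v. f (fa_word u) (fa_word v))"
  by (simp add: sweedler_D)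
lemma linmap_Sw: "linmap (\<lambda>x. sweedler x f)"
  unfolding sweedler_D[abs_def] by (rule linmap_lin)
lemmas Sw_add = linmapD(1)[OF linmap_Sw] and Sw_smult = linmapD(2)[OF linmap_Sw]
  and Sw_zero = linmapD(3)[OF linmap_Sw] and Sw_sum = linmapD(4)[OF linmap_Sw]
  and Sw_uminus = linmapD(5)[OF linmap_Sw] and Sw_diff = linmapD(6)[OF linmap_Sw]
lemma Sw_hom: "linmap h \<Longrightarrow> h (sweedler x f) = sweedler x (\<lambda>u v. h (f u v))"
  by (simp add: sweedler_D lin_hom linmap_D)
lemma Sw_fadd: "sweedler x (\<lambda>u v. f u v + g u v) = sweedler x f + sweedler x g"
  by (simp add: sweedler_D D_add lin_fadd)
lemma linmap_smult: "linmap (fa_smult c)"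
  by (simp add: linmap_def fa_smult_add mult.commute)
lemma Sw_fsmult: "sweedler x (\<lambda>u v. fa_smult c (f u v)) = fa_smult c (sweedler x f)"
  using Sw_hom[OF linmap_smult, of c x f] by simp
lemma D_uminus: "D w (\<lambda>u v. - (f u v::'b::ab_group_add)) = - D w f"
  by (rule D_hom[where h=uminus, symmetric]) simp_all
lemma D_diff: "D w (\<lambda>u v. (f u v::'b::ab_group_add) - g u v) = D w f - D w g"
  by (simp only: diff_conv_add_uminus D_add D_uminus)
lemma Sw_fdiff: "sweedler x (\<lambda>u v. f u v - g u v) = sweedler x f - sweedler x g"
  by (simp add: sweedler_D D_diff lin_fdiff)
lemma Sw_lin_of: "sweedler (lin g p) f = lin (\<lambda>w. sweedler (g w) f) p"
  by (rule lin_hom[OF linmap_Sw])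
lemma Sw_D_of: "sweedler (D w g) f = D w (\<lambda>u v. sweedler (g u v) f)"
  by (rule linmap_D[OF linmap_Sw])

lemma D_D_swap: "D w (\<lambda>u v. D t (\<lambda>e f. K u v e f)) = D t (\<lambda>e f. D w (\<lambda>u v. K u v e f))"
  by (induct w arbitrary: K) (simp_all add: D_add)

lemma Sw_swap: "sweedler x (\<lambda>u v. sweedler y (\<lambda>e f. K u v e f)) = sweedler y (\<lambda>e f. sweedler x (\<lambda>u v. K u v e f))"
  unfolding sweedler_D D_lin
  by (subst lin_swap, rule lin_cong, rule lin_cong, rule D_D_swap)

lemma Sw_mult: "sweedler (fa_mult p p') G = sweedler p (\<lambda>a b. sweedler p' (\<lambda>c d. G (fa_mult a c) (fa_mult b d)))"
proof -
  have "sweedler (fa_mult p p') G = lin (\<lambda>u. lin (\<lambda>v. sweedler (fa_word (u @ v)) G) p') p"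
    by (simp add: fa_mult_lin Sw_lin_of)
  also have "\<dots> = sweedler p (\<lambda>a b. sweedler p' (\<lambda>c d. G (fa_mult a c) (fa_mult b d)))"
    by (simp add: Sw_word D_append sweedler_D D_lin M_word)
  finally show ?thesis .
qed

lemma D_Cons2: "D [a, b] f = f [a, b] [] + f [a] [b] + f [b] [a] + f [] [a, b]"
  by (simp add: add_ac)

locale UEA =
  fixes scale :: "'k::field \<Rightarrow> 'l::ab_group_add \<Rightarrow> 'l" and br :: "'l \<Rightarrow> 'l \<Rightarrow> 'l"
  assumes two: "(2::'k) \<noteq> 0"
begin

abbreviation "I \<equiv> uea_ideal scale br"
abbreviation "E \<equiv> ueq scale br"

lemma I_add: "p \<in> I \<Longrightarrow> q \<in> I \<Longrightarrow> p + q \<in> I" by (rule uea_ideal.add)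
lemma I_smult: "p \<in> I \<Longrightarrow> fa_smult c p \<in> I" by (rule uea_ideal.smult)
lemma I_zero[simp]: "0 \<in> I" by (rule uea_ideal.zero)
lemma I_uminus: "p \<in> I \<Longrightarrow> - p \<in> I" by (metis I_smult fa_smult_m1)
lemma I_diff: "p \<in> I \<Longrightarrow> q \<in> I \<Longrightarrow> p - q \<in> I"
  by (simp only: diff_conv_add_uminus I_add I_uminus)
lemma I_lmult: "p \<in> I \<Longrightarrow> fa_mult q p \<in> I" by (rule uea_ideal.lmult)
lemma I_rmult: "p \<in> I \<Longrightarrow> fa_mult p q \<in> I" by (rule uea_ideal.rmult)
lemma I_sum: "(\<And>a. a \<in> A \<Longrightarrow> f a \<in> I) \<Longrightarrow> sum f A \<in> I"
  by (induct A rule: infinite_finite_induct) (auto intro: I_add)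
lemma I_lin: "(\<And>w. g w \<in> I) \<Longrightarrow> lin g p \<in> I"
  unfolding lin_def by (intro I_sum I_smult)
lemma I_D: "(\<And>u v. f u v \<in> I) \<Longrightarrow> D w f \<in> I"
  by (rule D_closed) (auto intro: I_add)
lemma I_Sw: "(\<And>u v. f u v \<in> I) \<Longrightarrow> sweedler x f \<in> I"
  unfolding sweedler_D by (intro I_lin I_D)

lemma E_def: "E p q \<longleftrightarrow> p - q \<in> I" by (simp add: ueq_def)
lemma E_refl[simp]: "E p p" by (simp add: E_def)
lemma E_sym: "E p q \<Longrightarrow> E q p"
  unfolding E_def by (drule I_uminus) simp
lemma E_trans: "E p q \<Longrightarrow> E q r \<Longrightarrow> E p r"
  unfolding E_def by (drule (1) I_add) simp
lemma E_add: "E a b \<Longrightarrow> E c d \<Longrightarrow> E (a + c) (b + d)"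
  unfolding E_def by (drule (1) I_add) (simp add: algebra_simps)
lemma E_diff: "E a b \<Longrightarrow> E c d \<Longrightarrow> E (a - c) (b - d)"
  unfolding E_def by (drule (1) I_diff) (simp add: algebra_simps)
lemma E_uminus: "E a b \<Longrightarrow> E (- a) (- b)"
  unfolding E_def by (drule I_uminus) (simp add: algebra_simps)
lemma E_smult: "E a b \<Longrightarrow> E (fa_smult c a) (fa_smult c b)"
  unfolding E_def by (drule I_smult[where c=c]) (simp add: fa_smult_minus)
lemma E_M: "E a b \<Longrightarrow> E c d \<Longrightarrow> E (fa_mult a c) (fa_mult b d)"
proof -
  assume "E a b" "E c d"
  then have "fa_mult (a - b) c \<in> I" "fa_mult b (c - d) \<in> I" unfolding E_def by (auto intro: I_rmult I_lmult)
  then have "fa_mult (a - b) c + fa_mult b (c - d) \<in> I" by (rule I_add)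
  then show ?thesis unfolding E_def by (simp add: M_diff1 M_diff2)
qed
lemma E_lin: "(\<And>w. E (g w) (h w)) \<Longrightarrow> E (lin g p) (lin h p)"
  unfolding E_def lin_fdiff[symmetric] by (rule I_lin)
lemma E_D: "(\<And>u v. E (f u v) (g u v)) \<Longrightarrow> E (D w f) (D w g)"
  unfolding E_def D_diff[symmetric] by (rule I_D)
lemma E_Sw: "(\<And>u v. E (f u v) (g u v)) \<Longrightarrow> E (sweedler x f) (sweedler x g)"
  unfolding E_def Sw_fdiff[symmetric] by (rule I_Sw)
lemma E_0: "E p 0 \<longleftrightarrow> p \<in> I" by (simp add: E_def)

end

context UEA begin

definition elin :: "(('l,'k) fa \<Rightarrow> ('l,'k) fa) \<Rightarrow> bool" where
  "elin \<phi> \<longleftrightarrow> (\<forall>p p'. E p p' \<longrightarrow> E (\<phi> p) (\<phi> p')) \<and>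
     (\<forall>c p p'. E (\<phi> (fa_smult c p + p')) (fa_smult c (\<phi> p) + \<phi> p'))"

definition good :: "(('l,'k) fa \<Rightarrow> ('l,'k) fa \<Rightarrow> ('l,'k) fa) \<Rightarrow> bool" where
  "good G \<longleftrightarrow> (\<forall>v. elin (\<lambda>p. G p v)) \<and> (\<forall>p. elin (\<lambda>v. G p v))"

lemma elin_resp: "elin \<phi> \<Longrightarrow> E p p' \<Longrightarrow> E (\<phi> p) (\<phi> p')"
  by (simp add: elin_def)
lemma elin_lc: "elin \<phi> \<Longrightarrow> E (\<phi> (fa_smult c p + p')) (fa_smult c (\<phi> p) + \<phi> p')"
  by (simp add: elin_def)
lemma elin_zero: assumes "elin \<phi>" shows "E (\<phi> 0) 0"
proof -
  have "E (\<phi> 0) (\<phi> 0 + \<phi> 0)" using elin_lc[OF assms, of 1 0 0] by simp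
  then show ?thesis unfolding E_def by (drule_tac I_uminus) simp
qed
lemma elin_add: assumes "elin \<phi>" shows "E (\<phi> (p + p')) (\<phi> p + \<phi> p')"
  using elin_lc[OF assms, of 1 p p'] by simp
lemma elin_smult: assumes "elin \<phi>" shows "E (\<phi> (fa_smult c p)) (fa_smult c (\<phi> p))"
proof -
  have "E (\<phi> (fa_smult c p + 0)) (fa_smult c (\<phi> p) + \<phi> 0)" by (rule elin_lc[OF assms])
  moreover have "E (fa_smult c (\<phi> p) + \<phi> 0) (fa_smult c (\<phi> p) + 0)"
    by (rule E_add[OF E_refl elin_zero[OF assms]])
  ultimately show ?thesis by (simp add: E_trans)
qed
lemma elin_diff: assumes "elin \<phi>" shows "E (\<phi> (p - p')) (\<phi> p - \<phi> p')"
proof -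
  have "E (\<phi> (fa_smult (-1) p' + p)) (fa_smult (-1) (\<phi> p') + \<phi> p)" by (rule elin_lc[OF assms])
  then show ?thesis by (simp add: fa_smult_m1)
qed
lemma elin_sum: assumes "elin \<phi>" shows "E (\<phi> (sum f A)) (\<Sum>a\<in>A. \<phi> (f a))"
proof (induct A rule: infinite_finite_induct)
  case (infinite A) then show ?case using elin_zero[OF assms] by simp
next
  case empty then show ?case using elin_zero[OF assms] by simp
next
  case (insert x F)
  then show ?case using elin_add[OF assms, of "f x" "sum f F"]
    by (simp add: E_trans E_add)
qed
lemma E_sum: "(\<And>a. a \<in> A \<Longrightarrow> E (f a) (g a)) \<Longrightarrow> E (sum f A) (sum g A)"
  unfolding E_def sum_subtractf[symmetric] by (rule I_sum)
lemma elin_lin: assumes "elin \<phi>" shows "E (\<phi> (lin g p)) (lin (\<lambda>w. \<phi> (g w)) p)"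
  unfolding lin_def by (rule E_trans[OF elin_sum[OF assms] E_sum[OF elin_smult[OF assms]]])
lemma elin_D: assumes "elin \<phi>" shows "E (\<phi> (D w f)) (D w (\<lambda>u v. \<phi> (f u v)))"
proof (induct w arbitrary: f)
  case Nil then show ?case by simp
next
  case (Cons a w)
  show ?case by (simp, rule E_trans[OF elin_add[OF assms] E_add[OF Cons Cons]])
qed
lemma elin_Sw: assumes "elin \<phi>" shows "E (\<phi> (sweedler x f)) (sweedler x (\<lambda>u v. \<phi> (f u v)))"
  unfolding sweedler_D by (rule E_trans[OF elin_lin[OF assms] E_lin[OF elin_D[OF assms]]])

lemma elin_id: "elin (\<lambda>p. p)"
  by (simp add: elin_def)
lemma elin_linmap: assumes "linmap \<phi>" "\<And>p. p \<in> I \<Longrightarrow> \<phi> p \<in> I" shows "elin \<phi>"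
  unfolding elin_def E_def using assms by (simp add: linmapD(6)[OF assms(1), symmetric] linmapD(1,2)[OF assms(1)])
lemma elin_M1: "elin (\<lambda>c. fa_mult c a)"
  by (rule elin_linmap[OF linmap_M1 I_rmult])
lemma elin_M2: "elin (\<lambda>c. fa_mult a c)"
  by (rule elin_linmap[OF linmap_M2 I_lmult])
lemma elin_comp: assumes "elin \<phi>" "elin \<psi>" shows "elin (\<lambda>p. \<phi> (\<psi> p))"
  unfolding elin_def
proof (intro conjI allI impI)
  fix p p' assume "E p p'" then show "E (\<phi> (\<psi> p)) (\<phi> (\<psi> p'))"
    by (intro elin_resp[OF assms(1)] elin_resp[OF assms(2)])
next
  fix c p p'
  show "E (\<phi> (\<psi> (fa_smult c p + p'))) (fa_smult c (\<phi> (\<psi> p)) + \<phi> (\<psi> p'))"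
    by (rule E_trans[OF elin_resp[OF assms(1) elin_lc[OF assms(2)]] elin_lc[OF assms(1)]])
qed
lemma elin_Sw_fam: assumes "\<And>e f. elin (K e f)" shows "elin (\<lambda>p. sweedler y (\<lambda>e f. K e f p))"
  unfolding elin_def
proof (intro conjI allI impI)
  fix p p' assume "E p p'" then show "E (sweedler y (\<lambda>e f. K e f p)) (sweedler y (\<lambda>e f. K e f p'))"
    by (intro E_Sw elin_resp[OF assms])
next
  fix c p p'
  have "E (sweedler y (\<lambda>e f. K e f (fa_smult c p + p'))) (sweedler y (\<lambda>e f. fa_smult c (K e f p) + K e f p'))"
    by (intro E_Sw elin_lc[OF assms])
  then show "E (sweedler y (\<lambda>e f. K e f (fa_smult c p + p'))) (fa_smult c (sweedler y (\<lambda>e f. K e f p)) + sweedler y (\<lambda>e f. K e f p'))"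
    by (simp add: Sw_fadd Sw_fsmult)
qed

lemma good_elin1: "good G \<Longrightarrow> elin (\<lambda>p. G p v)" by (simp add: good_def)
lemma good_elin2: "good G \<Longrightarrow> elin (\<lambda>v. G p v)" by (simp add: good_def)
lemma good_resp: assumes "good G" "E p p'" "E v v'" shows "E (G p v) (G p' v')"
  by (rule E_trans[OF elin_resp[OF good_elin1[OF assms(1)] assms(2)] elin_resp[OF good_elin2[OF assms(1)] assms(3)]])
lemma good_M: "good fa_mult"
  unfolding good_def using elin_M1 elin_M2 by blast
lemma good_comp: assumes "good G" "elin \<phi>" "elin \<psi>" shows "good (\<lambda>a b. G (\<phi> a) (\<psi> b))"
  unfolding good_def
  using elin_comp[OF good_elin1[OF assms(1)] assms(2)] elin_comp[OF good_elin2[OF assms(1)] assms(3)] by blast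
lemma good_Sw: assumes "\<And>e f. good (K e f)" shows "good (\<lambda>a b. sweedler y (\<lambda>e f. K e f a b))"
  unfolding good_def
proof (intro conjI allI)
  fix v show "elin (\<lambda>p. sweedler y (\<lambda>e f. K e f p v))"
    by (rule elin_Sw_fam[OF good_elin1[OF assms]])
next
  fix p show "elin (\<lambda>v. sweedler y (\<lambda>e f. K e f p v))"
    by (rule elin_Sw_fam[OF good_elin2[OF assms]])
qed

lemma gen_word: "fa_gen a = fa_word [a]" by (simp add: fa_gen_def)

lemma good_lcomb1: assumes "good G" "p - fa_smult c q - r \<in> I" shows "G p v - fa_smult c (G q v) - G r v \<in> I"
proof -
  have "E (G p v) (G (fa_smult c q + r) v)" using assms(2)
    by (intro good_resp[OF assms(1)]) (simp_all add: E_def algebra_simps)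
  moreover have "E (G (fa_smult c q + r) v) (fa_smult c (G q v) + G r v)"
    by (rule elin_lc[OF good_elin1[OF assms(1)]])
  ultimately show ?thesis unfolding E_def by (drule_tac E_trans[unfolded E_def]) (simp_all add: algebra_simps)
qed
lemma good_lcomb2: assumes "good G" "p - fa_smult c q - r \<in> I" shows "G v p - fa_smult c (G v q) - G v r \<in> I"
proof -
  have "E (G v p) (G v (fa_smult c q + r))" using assms(2)
    by (intro good_resp[OF assms(1)]) (simp_all add: E_def algebra_simps)
  moreover have "E (G v (fa_smult c q + r)) (fa_smult c (G v q) + G v r)"
    by (rule elin_lc[OF good_elin2[OF assms(1)]])
  ultimately show ?thesis unfolding E_def by (drule_tac E_trans[unfolded E_def]) (simp_all add: algebra_simps)
qed

lemma Sw_gen: "sweedler (fa_gen a) G = G (fa_gen a) (fa_word []) + G (fa_word []) (fa_gen a)"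
  by (simp add: gen_word Sw_word)

lemma Sw_I: "p \<in> I \<Longrightarrow> good G \<Longrightarrow> sweedler p G \<in> I"
proof (induct p arbitrary: G rule: uea_ideal.induct)
  case (rel_add a b)
  let ?p = "fa_gen (a + b)" and ?q = "fa_gen a" and ?r = "fa_gen b" and ?one = "fa_word []"
  have h: "?p - fa_smult 1 ?q - ?r \<in> I" using uea_ideal.rel_add by simp
  have "G ?p ?one - fa_smult 1 (G ?q ?one) - G ?r ?one + (G ?one ?p - fa_smult 1 (G ?one ?q) - G ?one ?r) \<in> I"
    by (intro I_add good_lcomb1[OF rel_add h] good_lcomb2[OF rel_add h])
  then show ?case by (simp add: Sw_diff Sw_add Sw_gen algebra_simps)
next
  case (rel_smult c a)
  let ?p = "fa_gen (scale c a)" and ?q = "fa_gen a" and ?r = "0" and ?one = "fa_word []"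
  have h: "?p - fa_smult c ?q - ?r \<in> I" using uea_ideal.rel_smult by simp
  have A: "G ?p ?one - fa_smult c (G ?q ?one) - G ?r ?one \<in> I" by (rule good_lcomb1[OF rel_smult h])
  have B: "G ?one ?p - fa_smult c (G ?one ?q) - G ?one ?r \<in> I" by (rule good_lcomb2[OF rel_smult h])
  have C: "G ?r ?one \<in> I" and D: "G ?one ?r \<in> I"
    using elin_zero[OF good_elin1[OF rel_smult]] elin_zero[OF good_elin2[OF rel_smult]] by (simp_all add: E_0)
  have "(G ?p ?one - fa_smult c (G ?q ?one) - G ?r ?one) + (G ?one ?p - fa_smult c (G ?one ?q) - G ?one ?r)
     + G ?r ?one + G ?one ?r \<in> I" by (rule I_add[OF I_add[OF I_add[OF A B] C] D])
  then show ?case by (simp add: Sw_diff Sw_gen Sw_smult algebra_simps fa_smult_add)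
next
  case (rel_br a b)
  let ?p = "fa_mult (fa_gen a) (fa_gen b)" and ?q = "fa_mult (fa_gen b) (fa_gen a)" and ?r = "fa_gen (br a b)" and ?one = "fa_word []"
  have h: "?p - fa_smult 1 ?q - ?r \<in> I" using uea_ideal.rel_br by simp
  have "G ?p ?one - fa_smult 1 (G ?q ?one) - G ?r ?one + (G ?one ?p - fa_smult 1 (G ?one ?q) - G ?one ?r) \<in> I"
    by (intro I_add good_lcomb1[OF rel_br h] good_lcomb2[OF rel_br h])
  then show ?case by (simp add: Sw_diff Sw_add Sw_gen gen_word M_word Sw_word D_Cons2 algebra_simps)
next
  case zero then show ?case by (simp add: Sw_zero)
next
  case (add p q) then show ?case by (simp add: Sw_add I_add)
next
  case (smult p c) then show ?case by (simp add: Sw_smult I_smult)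
next
  case (lmult p q)
  have "sweedler (fa_mult q p) G = sweedler q (\<lambda>a b. sweedler p (\<lambda>c d. G (fa_mult a c) (fa_mult b d)))"
    by (rule Sw_mult)
  also have "\<dots> \<in> I"
    by (intro I_Sw lmult(2) good_comp[OF lmult(3) elin_M2 elin_M2])
  finally show ?case .
next
  case (rmult p q)
  have "sweedler (fa_mult p q) G = sweedler p (\<lambda>a b. sweedler q (\<lambda>c d. G (fa_mult a c) (fa_mult b d)))"
    by (rule Sw_mult)
  also have "\<dots> \<in> I"
    by (intro rmult(2) good_Sw good_comp[OF rmult(3) elin_M1 elin_M1])
  finally show ?case .
qed

lemma Sw_resp: "E p p' \<Longrightarrow> good G \<Longrightarrow> E (sweedler p G) (sweedler p' G)"
  unfolding E_def Sw_diff[symmetric] by (rule Sw_I)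

end

definition Fd :: "nat \<Rightarrow> ('l,'k::field) fa set" where
  "Fd n = {p. \<forall>w\<in>Poly_Mapping.keys p. length w \<le> n}"

lemma Fd_zero[simp]: "0 \<in> Fd n" by (simp add: Fd_def)
lemma Fd_add: "p \<in> Fd n \<Longrightarrow> q \<in> Fd n \<Longrightarrow> p + q \<in> Fd n"
  using keys_add[of p q] by (auto simp: Fd_def)
lemma Fd_smult: "p \<in> Fd n \<Longrightarrow> fa_smult c p \<in> Fd n"
  using keys_fa_smult[of c p] by (auto simp: Fd_def)
lemma Fd_diff: "p \<in> Fd n \<Longrightarrow> q \<in> Fd n \<Longrightarrow> p - q \<in> Fd n"
  using keys_diff[of p q] by (auto simp: Fd_def)
lemma Fd_uminus: "p \<in> Fd n \<Longrightarrow> - p \<in> Fd n"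
  by (auto simp: Fd_def)
lemma Fd_word: "length w \<le> n \<Longrightarrow> fa_word w \<in> Fd n"
  by (simp add: Fd_def fa_word_def)
lemma Fd_mono: "m \<le> n \<Longrightarrow> p \<in> Fd m \<Longrightarrow> p \<in> Fd n"
  by (auto simp: Fd_def)
lemma Fd_sum: "(\<And>a. a \<in> A \<Longrightarrow> f a \<in> Fd n) \<Longrightarrow> sum f A \<in> Fd n"
  by (induct A rule: infinite_finite_induct) (auto intro: Fd_add)
lemma Fd_lin: "(\<And>w. w \<in> Poly_Mapping.keys p \<Longrightarrow> g w \<in> Fd n) \<Longrightarrow> lin g p \<in> Fd n"
  unfolding lin_def by (intro Fd_sum Fd_smult)
lemma Fd_D: "(\<And>u v. length u + length v = length w \<Longrightarrow> f u v \<in> Fd n) \<Longrightarrow> D w f \<in> Fd n"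
  by (rule D_closed[where S="Fd n"]) (auto intro: Fd_add)
lemma Fd_gen_mult: "p \<in> Fd n \<Longrightarrow> fa_mult (fa_gen a) p \<in> Fd (Suc n)"
  unfolding fa_mult_lin fa_gen_def lin_word
  by (rule Fd_lin) (auto simp: Fd_def fa_word_def)
lemma Fd_exists: "\<exists>n. p \<in> Fd n"
  by (rule exI[of _ "Max (insert 0 (length ` Poly_Mapping.keys p))"]) (auto simp: Fd_def)
lemma Fd0: assumes "p \<in> Fd 0" shows "p = fa_smult (Poly_Mapping.lookup p []) (fa_word [])"
proof -
  have "Poly_Mapping.lookup p k = 0" if "k \<noteq> []" for k
    using assms that by (auto simp: Fd_def in_keys_iff)
  then show ?thesis
    by (auto simp: poly_mapping_eq_iff fun_eq_iff fa_word_def lookup_single when_def)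
qed

lemma M_zero_r: "fa_mult p 0 = 0" by (simp add: fa_mult_def)
lemma M_zero_l: "fa_mult 0 p = 0" by (simp add: fa_mult_def)

lemma uq_word: "uq (fa_word w) = D w (\<lambda>u v. fa_word (u @ v))"
  by (simp add: uq_def Sw_word M_word)
lemma linmap_uq: "linmap uq"
  unfolding uq_def[abs_def] by (rule linmap_Sw)
lemmas uq_add = linmapD(1)[OF linmap_uq] and uq_smult = linmapD(2)[OF linmap_uq]
  and uq_zero = linmapD(3)[OF linmap_uq] and uq_diff = linmapD(6)[OF linmap_uq]
lemma uq_one: "uq (fa_word []) = fa_word []" by (simp add: uq_word)
lemma uq_Fd: "uq (fa_word w) \<in> Fd (length w)"
  unfolding uq_word by (rule Fd_D) (auto intro: Fd_word)
lemma uq_lin: "uq p = lin (\<lambda>w. uq (fa_word w)) p"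
  by (subst (1) lin_id[symmetric]) (rule lin_hom[OF linmap_uq])

context UEA begin

lemma uq_resp: "E p p' \<Longrightarrow> E (uq p) (uq p')"
  unfolding uq_def by (rule Sw_resp[OF _ good_M])

definition J :: "nat \<Rightarrow> ('l,'k) fa set" where
  "J n = {p. \<exists>e\<in>Fd n. p - e \<in> I}"

lemma J_I: "p \<in> I \<Longrightarrow> p \<in> J n" unfolding J_def by (rule CollectI, rule bexI[of _ 0]) auto
lemma J_Fd: "p \<in> Fd n \<Longrightarrow> p \<in> J n" unfolding J_def by (auto intro!: bexI[of _ p])
lemma J_zero[simp]: "0 \<in> J n" by (rule J_I) simp
lemma J_add: "p \<in> J n \<Longrightarrow> q \<in> J n \<Longrightarrow> p + q \<in> J n"
  unfolding J_def
proof clarify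
  fix e e' assume "e \<in> Fd n" "p - e \<in> I" "e' \<in> Fd n" "q - e' \<in> I"
  then show "\<exists>e\<in>Fd n. p + q - e \<in> I"
    by (intro bexI[of _ "e + e'"] Fd_add) (auto dest: I_add simp: algebra_simps)
qed
lemma J_smult: "p \<in> J n \<Longrightarrow> fa_smult c p \<in> J n"
  unfolding J_def
proof clarify
  fix e assume "e \<in> Fd n" "p - e \<in> I"
  then show "\<exists>e\<in>Fd n. fa_smult c p - e \<in> I"
    by (intro bexI[of _ "fa_smult c e"] Fd_smult) (auto dest: I_smult[where c=c] simp: fa_smult_minus)
qed
lemma J_uminus: "p \<in> J n \<Longrightarrow> - p \<in> J n"
  by (metis J_smult fa_smult_m1)
lemma J_diff: "p \<in> J n \<Longrightarrow> q \<in> J n \<Longrightarrow> p - q \<in> J n"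
  by (simp only: diff_conv_add_uminus J_add J_uminus)
lemma J_mono: "m \<le> n \<Longrightarrow> p \<in> J m \<Longrightarrow> p \<in> J n"
  unfolding J_def by (auto intro: Fd_mono)
lemma J_gen_mult: "p \<in> J n \<Longrightarrow> fa_mult (fa_gen a) p \<in> J (Suc n)"
  unfolding J_def
proof clarify
  fix e assume "e \<in> Fd n" "p - e \<in> I"
  then show "\<exists>e\<in>Fd (Suc n). fa_mult (fa_gen a) p - e \<in> I"
    by (intro bexI[of _ "fa_mult (fa_gen a) e"] Fd_gen_mult) (auto dest: I_lmult[where q="fa_gen a"] simp: M_diff2)
qed
lemma J_D: "(\<And>u v. length u + length v = length w \<Longrightarrow> f u v \<in> J n) \<Longrightarrow> D w f \<in> J n"
  by (rule D_closed[where S="J n"]) (auto intro: J_add)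
lemma J_sum: "(\<And>a. a \<in> A \<Longrightarrow> f a \<in> J n) \<Longrightarrow> sum f A \<in> J n"
  by (induct A rule: infinite_finite_induct) (auto intro: J_add)
lemma J_lin: "(\<And>w. w \<in> Poly_Mapping.keys p \<Longrightarrow> g w \<in> J n) \<Longrightarrow> lin g p \<in> J n"
  unfolding lin_def by (intro J_sum J_smult)

lemma comm_J: "fa_word (u @ a # v) - fa_word (a # u @ v) \<in> J (length u + length v)"
proof (induct u)
  case Nil then show ?case by simp
next
  case (Cons b u)
  let ?X = "fa_word (u @ v)"
  have e: "fa_word ((b # u) @ a # v) - fa_word (a # (b # u) @ v) =
     fa_mult (fa_gen b) (fa_word (u @ a # v) - fa_word (a # u @ v))
     + fa_mult (fa_mult (fa_gen b) (fa_gen a) - fa_mult (fa_gen a) (fa_gen b) - fa_gen (br b a)) ?X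
     + fa_mult (fa_gen (br b a)) ?X"
    by (simp add: M_diff1 M_diff2 gen_word M_word)
  have 1: "fa_mult (fa_gen b) (fa_word (u @ a # v) - fa_word (a # u @ v)) \<in> J (length (b # u) + length v)"
    using J_gen_mult[OF Cons] by simp
  have 2: "fa_mult (fa_mult (fa_gen b) (fa_gen a) - fa_mult (fa_gen a) (fa_gen b) - fa_gen (br b a)) ?X \<in> J (length (b # u) + length v)"
    by (intro J_I I_rmult uea_ideal.rel_br)
  have 3: "fa_mult (fa_gen (br b a)) ?X \<in> J (length (b # u) + length v)"
    by (rule J_Fd) (simp add: gen_word M_word Fd_word)
  show ?case unfolding e by (intro J_add 1 2 3)
qed

lemma smult_two: "fa_smult 2 y = y + y"
  by (metis fa_smult_add_left fa_smult_one one_add_one)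

lemma B_word: "uq (fa_word w) - fa_smult (2 ^ length w) (fa_word w) \<in> J (length w - 1)"
proof (induct w)
  case Nil then show ?case by (simp add: uq_one)
next
  case (Cons a w)
  let ?n = "length w"
  define X1 :: "('l,'k) fa" where "X1 = D w (\<lambda>u v. fa_word (a # u @ v))"
  define X2 :: "('l,'k) fa" where "X2 = D w (\<lambda>u v. fa_word (u @ a # v))"
  have u: "uq (fa_word (a # w)) = X1 + X2" by (simp add: uq_word X1_def X2_def)
  have x1: "X1 = fa_mult (fa_gen a) (uq (fa_word w))"
    by (simp add: X1_def uq_word M_D2 gen_word M_word)
  have d: "X2 - X1 \<in> J ?n"
    unfolding X1_def X2_def D_diff[symmetric] by (rule J_D) (metis comm_J)
  have m: "fa_mult (fa_gen a) (uq (fa_word w) - fa_smult (2 ^ ?n) (fa_word w)) \<in> J ?n"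
  proof (cases w)
    case Nil then show ?thesis by (simp add: uq_one M_zero_r)
  next
    case (Cons b w') then show ?thesis using J_gen_mult[OF Cons.hyps, of a] by simp
  qed
  have e: "uq (fa_word (a # w)) - fa_smult (2 ^ length (a # w)) (fa_word (a # w))
     = (X2 - X1) + fa_smult 2 (fa_mult (fa_gen a) (uq (fa_word w) - fa_smult (2 ^ ?n) (fa_word w)))"
    unfolding u by (simp add: x1 M_diff2 M_smult2 gen_word M_word fa_smult_minus smult_two)
  show ?case unfolding e by (simp add: J_add d J_smult m)
qed

lemma B_Fd: assumes "p \<in> Fd (Suc n)" shows "uq p - fa_smult (2 ^ Suc n) p \<in> J n"
proof -
  have "uq p - fa_smult (2 ^ Suc n) p = lin (\<lambda>w. uq (fa_word w) - fa_smult (2 ^ Suc n) (fa_word w)) p"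
    by (subst uq_lin) (simp add: lin_fdiff lin_fsmult lin_id)
  also have "\<dots> \<in> J n"
  proof (rule J_lin)
    fix w assume "w \<in> Poly_Mapping.keys p"
    then have l: "length w \<le> Suc n" using assms by (auto simp: Fd_def)
    show "uq (fa_word w) - fa_smult (2 ^ Suc n) (fa_word w) \<in> J n"
    proof (cases "length w = Suc n")
      case True then show ?thesis using B_word[of w] by simp
    next
      case False
      then have "length w \<le> n" using l by simp
      then show ?thesis
        by (intro J_Fd Fd_diff Fd_smult Fd_word Fd_mono[OF _ uq_Fd])
    qed
  qed
  finally show ?thesis .
qed

lemma uq_bij_Fd: "p \<in> Fd n \<Longrightarrow> (uq p \<in> I \<longrightarrow> p \<in> I) \<and> (\<exists>y. uq y - p \<in> I)"
proof (induct n arbitrary: p)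
  case 0
  then have "uq p = p" by (subst Fd0[OF 0], subst (2) Fd0[OF 0]) (simp add: uq_smult uq_one)
  then show ?case by (auto intro: exI[of _ p])
next
  case (Suc n)
  define t :: 'k where "t = 2 ^ Suc n"
  have t0: "t \<noteq> 0" using two by (simp add: t_def)
  obtain e where e: "e \<in> Fd n" "uq p - fa_smult t p - e \<in> I"
    using B_Fd[OF Suc(2)] by (auto simp: J_def t_def)
  have inj: "p \<in> I" if "uq p \<in> I"
  proof -
    let ?p' = "fa_smult (- inverse t) e"
    have "fa_smult (inverse t) (uq p - (uq p - fa_smult t p - e)) \<in> I"
      by (intro I_smult I_diff that e(2))
    then have A: "fa_smult (inverse t) e + p \<in> I" using t0 by (simp add: fa_smult_add fa_smult_minus)
    have eq: "p - ?p' = fa_smult (inverse t) e + p"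
      by (simp add: poly_mapping_eq_iff fun_eq_iff lookup_minus lookup_add)
    have pp: "p - ?p' \<in> I" unfolding eq by (rule A)
    then have d: "uq p - uq ?p' \<in> I" using uq_resp[of p ?p'] by (simp add: E_def)
    have "uq p - (uq p - uq ?p') \<in> I" by (rule I_diff[OF that d])
    then have "uq ?p' \<in> I" by simp
    moreover have "?p' \<in> Fd n" by (rule Fd_smult[OF e(1)])
    ultimately have "?p' \<in> I" using Suc(1) by blast
    then have "(p - ?p') + ?p' \<in> I" by (rule I_add[OF pp])
    then show ?thesis by simp
  qed
  have surj: "\<exists>y. uq y - p \<in> I"
  proof -
    let ?y0 = "fa_smult (inverse t) p"
    have "fa_smult (inverse t) (uq p - fa_smult t p - e) \<in> I" by (rule I_smult[OF e(2)])
    then have a: "uq ?y0 - p - fa_smult (inverse t) e \<in> I" using t0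
      by (simp add: uq_smult fa_smult_minus)
    obtain y1 where y1: "uq y1 - (- fa_smult (inverse t) e) \<in> I"
      using Suc(1)[of "- fa_smult (inverse t) e"] Fd_uminus[OF Fd_smult[OF e(1)]] by blast
    have "(uq ?y0 - p - fa_smult (inverse t) e) + (uq y1 - (- fa_smult (inverse t) e)) \<in> I"
      by (rule I_add[OF a y1])
    then have "uq (?y0 + y1) - p \<in> I" by (simp add: uq_add algebra_simps)
    then show ?thesis by blast
  qed
  show ?case using inj surj by blast
qed

lemma uq_inj0: "uq p \<in> I \<Longrightarrow> p \<in> I"
  using Fd_exists[of p] uq_bij_Fd by blast
lemma uq_surj: "\<exists>y. E (uq y) x"
  using Fd_exists[of x] uq_bij_Fd by (auto simp: E_def)
lemma uq_inj: "E (uq p) (uq p') \<Longrightarrow> E p p'"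
  unfolding E_def uq_diff[symmetric] by (rule uq_inj0)

abbreviation "R \<equiv> ur scale br"

lemma uq_R: "E (uq (R x)) x"
  unfolding ur_def by (rule someI_ex[OF uq_surj])
lemma R_eq: "E (uq p) x \<Longrightarrow> E (R x) p"
  by (rule uq_inj, rule E_trans[OF uq_R E_sym])
lemma R_uq: "E (R (uq p)) p"
  by (rule R_eq) simp
lemma elin_uq: "elin uq"
  by (rule elin_linmap[OF linmap_uq]) (metis E_0 uq_resp uq_zero)
lemma elin_R: "elin R"
  unfolding elin_def
proof (intro conjI allI impI)
  fix p p' assume "E p p'"
  then show "E (R p) (R p')" by (intro R_eq E_trans[OF uq_R E_sym])
next
  fix c p p'
  have "E (uq (fa_smult c (R p) + R p')) (fa_smult c p + p')"
    by (simp add: uq_add uq_smult E_add E_smult uq_R)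
  then show "E (R (fa_smult c p + p')) (fa_smult c (R p) + R p')" by (rule R_eq)
qed

end

lemma uq_lin_D: "uq N = lin (\<lambda>w. D w (\<lambda>u v. fa_word (u @ v))) N"
  by (simp add: uq_def sweedler_D M_word)

lemma half_twice: "(2::'k::field) \<noteq> 0 \<Longrightarrow> fa_smult (1/2) (x + x) = (x :: ('l,'k) fa)"
  by (simp add: poly_mapping_eq_iff fun_eq_iff lookup_add field_simps)

context UEA begin

declare E_trans[trans]

lemma Sw_uq: assumes G: "good G"
  shows "E (sweedler (uq N) G) (sweedler N (\<lambda>s t. G (uq s) (uq t)))"
proof -
  have lhs: "sweedler (uq N) G = lin (\<lambda>w. D4 w (\<lambda>a b c d. G (fa_word (a @ c)) (fa_word (b @ d)))) N"
    by (simp only: uq_lin_D Sw_lin_of Sw_D_of Sw_word D_append D4_def)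
  have rhs: "E (sweedler N (\<lambda>s t. G (uq s) (uq t))) (lin (\<lambda>w. D4 w (\<lambda>a b c d. G (fa_word (a @ b)) (fa_word (c @ d)))) N)"
    unfolding sweedler_D D4_def
  proof (intro E_lin E_D)
    fix u v
    show "E (G (uq (fa_word u)) (uq (fa_word v))) (D u (\<lambda>a b. D v (\<lambda>c d. G (fa_word (a @ b)) (fa_word (c @ d)))))"
      unfolding uq_word
      by (rule E_trans[OF elin_D[OF good_elin1[OF G]] E_D[OF elin_D[OF good_elin2[OF G]]]])
  qed
  show ?thesis unfolding lhs using rhs by (subst D4_swap23) (rule E_sym)
qed

lemma Sw_R: assumes G: "good G"
  shows "E (sweedler (R u) G) (sweedler u (\<lambda>s t. G (R s) (R t)))"
proof -
  have G': "good (\<lambda>s t. G (R s) (R t))" by (rule good_comp[OF G elin_R elin_R])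
  have "E (sweedler u (\<lambda>s t. G (R s) (R t))) (sweedler (uq (R u)) (\<lambda>s t. G (R s) (R t)))"
    by (rule Sw_resp[OF E_sym[OF uq_R] G'])
  also have "E (sweedler (uq (R u)) (\<lambda>s t. G (R s) (R t))) (sweedler (R u) (\<lambda>s t. G (R (uq s)) (R (uq t))))"
    by (rule Sw_uq[OF G'])
  also have "E (sweedler (R u) (\<lambda>s t. G (R (uq s)) (R (uq t)))) (sweedler (R u) G)"
    by (intro E_Sw good_resp[OF G] R_uq)
  finally show ?thesis by (rule E_sym)
qed

lemma x_RR: "E x (sweedler x (\<lambda>c d. fa_mult (R c) (R d)))"
proof -
  have "E x (uq (R x))" by (rule E_sym[OF uq_R])
  also have "uq (R x) = sweedler (R x) fa_mult" by (simp add: uq_def)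
  also have "E (sweedler (R x) fa_mult) (sweedler x (\<lambda>c d. fa_mult (R c) (R d)))"
    by (rule Sw_R[OF good_M])
  finally show ?thesis .
qed

lemma R_one: "E (R (fa_word [])) (fa_word [])"
  by (rule R_eq) (simp add: uq_one)
lemma R_gen: "E (R (fa_gen a)) (fa_smult (1/2) (fa_gen a))"
  by (rule R_eq) (simp add: uq_smult gen_word uq_word half_twice[OF two])

abbreviation "star \<equiv> ustar scale br"

lemma star_gen: "E (star (fa_gen a) y) (fa_smult (1/2) (fa_mult (fa_gen a) y + fa_mult y (fa_gen a)))"
proof -
  have "star (fa_gen a) y = fa_mult (fa_mult (R (fa_gen a)) y) (R (fa_word [])) + fa_mult (fa_mult (R (fa_word [])) y) (R (fa_gen a))"
    by (simp add: ustar_def Sw_gen)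
  also have "E \<dots> (fa_mult (fa_mult (fa_smult (1/2) (fa_gen a)) y) (fa_word []) + fa_mult (fa_mult (fa_word []) y) (fa_smult (1/2) (fa_gen a)))"
    by (intro E_add E_M R_gen R_one E_refl)
  also have "\<dots> = fa_smult (1/2) (fa_mult (fa_gen a) y + fa_mult y (fa_gen a))"
    by (simp add: M_smult1 M_smult2 fa_smult_add)
  finally show ?thesis .
qed

lemma part2: "E (star (fa_gen a) (fa_gen b)) (star (fa_gen b) (fa_gen a))"
  by (rule E_trans[OF star_gen E_sym[OF E_trans[OF star_gen]]]) (simp add: add.commute)

lemma star_gen2: "E (star (fa_gen a) (star (fa_gen b) (fa_gen c)))
   (fa_smult (1/4) (fa_word [a,b,c] + fa_word [a,c,b] + fa_word [b,c,a] + fa_word [c,b,a]))"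
proof -
  have "E (star (fa_gen a) (star (fa_gen b) (fa_gen c)))
     (fa_smult (1/2) (fa_mult (fa_gen a) (star (fa_gen b) (fa_gen c)) + fa_mult (star (fa_gen b) (fa_gen c)) (fa_gen a)))"
    by (rule star_gen)
  also have "E \<dots> (fa_smult (1/2) (fa_mult (fa_gen a) (fa_smult (1/2) (fa_mult (fa_gen b) (fa_gen c) + fa_mult (fa_gen c) (fa_gen b)))
       + fa_mult (fa_smult (1/2) (fa_mult (fa_gen b) (fa_gen c) + fa_mult (fa_gen c) (fa_gen b))) (fa_gen a)))"
    by (intro E_smult E_add E_M star_gen E_refl)
  also have "\<dots> = fa_smult (1/4) (fa_word [a,b,c] + fa_word [a,c,b] + fa_word [b,c,a] + fa_word [c,b,a])"
    by (simp add: M_smult1 M_smult2 M_add1 M_add2 fa_smult_add gen_word M_word algebra_simps)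
  finally show ?thesis .
qed

lemma part3: "E (star (fa_gen a) (star (fa_gen b) (fa_gen c)) - star (fa_gen b) (star (fa_gen a) (fa_gen c)))
    (fa_smult (1/4) (fa_gen (br (br a b) c)))"
proof -
  have "E (star (fa_gen a) (star (fa_gen b) (fa_gen c)) - star (fa_gen b) (star (fa_gen a) (fa_gen c)))
     (fa_smult (1/4) (fa_word [a,b,c] + fa_word [a,c,b] + fa_word [b,c,a] + fa_word [c,b,a])
      - fa_smult (1/4) (fa_word [b,a,c] + fa_word [b,c,a] + fa_word [a,c,b] + fa_word [c,a,b]))"
    by (intro E_diff star_gen2)
  also have "\<dots> = fa_smult (1/4) (fa_word [a,b,c] - fa_word [b,a,c] + fa_word [c,b,a] - fa_word [c,a,b])"
    by (simp add: fa_smult_minus[symmetric] algebra_simps)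
  also have "E \<dots> (fa_smult (1/4) (fa_gen (br (br a b) c)))"
  proof (rule E_smult)
    let ?r = "fa_mult (fa_gen a) (fa_gen b) - fa_mult (fa_gen b) (fa_gen a) - fa_gen (br a b)"
    let ?s = "fa_mult (fa_gen (br a b)) (fa_gen c) - fa_mult (fa_gen c) (fa_gen (br a b)) - fa_gen (br (br a b) c)"
    have m: "fa_mult ?r (fa_gen c) - fa_mult (fa_gen c) ?r + ?s \<in> I"
      by (intro I_add I_diff I_rmult I_lmult uea_ideal.rel_br)
    have eq: "fa_mult ?r (fa_gen c) - fa_mult (fa_gen c) ?r + ?s =
       (fa_word [a,b,c] - fa_word [b,a,c] + fa_word [c,b,a] - fa_word [c,a,b]) - fa_gen (br (br a b) c)"
      by (simp add: M_diff1 M_diff2 M_add1 M_add2 gen_word M_word algebra_simps)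
    show "E (fa_word [a,b,c] - fa_word [b,a,c] + fa_word [c,b,a] - fa_word [c,a,b]) (fa_gen (br (br a b) c))"
      unfolding E_def eq[symmetric] by (rule m)
  qed
  finally show ?thesis .
qed

end

lemma M_Sw1: "fa_mult (sweedler y F) q = sweedler y (\<lambda>e f. fa_mult (F e f) q)"
  by (rule Sw_hom[OF linmap_M1])
lemma M_Sw2: "fa_mult q (sweedler y F) = sweedler y (\<lambda>e f. fa_mult q (F e f))"
  by (rule Sw_hom[OF linmap_M2])
lemma D_Sw: "D w (\<lambda>u v. sweedler y (\<lambda>e f. K u v e f)) = sweedler y (\<lambda>e f. D w (\<lambda>u v. K u v e f))"
  unfolding sweedler_D D_lin
  by (rule lin_cong, rule D_D_swap)
lemma lin_Sw: "lin (\<lambda>w. sweedler y (\<lambda>e f. K w e f)) x = sweedler y (\<lambda>e f. lin (\<lambda>w. K w e f) x)"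
  unfolding sweedler_D
  by (subst lin_swap, rule lin_cong, rule D_lin[symmetric])

definition Sform :: "('l,'k::field) fa \<Rightarrow> ('l,'k) fa \<Rightarrow> ('l list \<Rightarrow> 'l list \<Rightarrow> 'l list \<Rightarrow> 'l list \<Rightarrow> ('l,'k) fa \<Rightarrow> ('l,'k) fa \<Rightarrow> ('l,'k) fa) \<Rightarrow> ('l,'k) fa" where
  "Sform x y K = sweedler y (\<lambda>e f. lin (\<lambda>w. D4 w (\<lambda>a b c d. K a b c d e f)) x)"

lemma Sform_swap: "Sform x y K = Sform x y (\<lambda>a b c d. K a d c b)"
  unfolding Sform_def
  by (rule arg_cong[where f="sweedler y"], rule ext, rule ext, rule lin_cong, rule D4_swap24)

lemma Sform_cong: "(\<And>a b c d e f. K a b c d e f = K' a b c d e f) \<Longrightarrow> Sform x y K = Sform x y K'"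
  unfolding Sform_def by simp

context UEA begin

lemma good_H2: "good H \<Longrightarrow> good (\<lambda>e f. H (fa_mult s1 (fa_mult e X)) (fa_mult s2 (fa_mult f Y)))"
  by (rule good_comp[OF _ elin_comp[OF elin_M2 elin_M1] elin_comp[OF elin_M2 elin_M1]])
lemma good_H1: "good H \<Longrightarrow> good (\<lambda>b1 b2. H (fa_mult s1 (fa_mult e b1)) (fa_mult s2 (fa_mult f b2)))"
  by (rule good_comp[OF _ elin_comp[OF elin_M2 elin_M2] elin_comp[OF elin_M2 elin_M2]])
lemma good_H3: "good H \<Longrightarrow> good (\<lambda>s1 s2. H (fa_mult s1 X) (fa_mult s2 Y))"
  by (rule good_comp[OF _ elin_M1 elin_M1])

lemma good_Sw_H2: assumes H: "good H"
  shows "good (\<lambda>e f. sweedler r (\<lambda>b1 b2. H (fa_mult s1 (fa_mult e (R b1))) (fa_mult s2 (fa_mult f (R b2)))))"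
proof -
  have "good (\<lambda>e f. H (fa_mult s1 (fa_mult e (R b1))) (fa_mult s2 (fa_mult f (R b2))))" for b1 b2
    by (rule good_H2[OF H])
  then show ?thesis
    by (rule good_Sw[where K="\<lambda>b1 b2 e f. H (fa_mult s1 (fa_mult e (R b1))) (fa_mult s2 (fa_mult f (R b2)))"])
qed

lemma good_Sw_Sw_H3: assumes H: "good H"
  shows "good (\<lambda>s1 s2. sweedler q (\<lambda>e f. sweedler r (\<lambda>b1 b2. H (fa_mult s1 (fa_mult (R e) (R b1))) (fa_mult s2 (fa_mult (R f) (R b2))))))"
proof -
  have "good (\<lambda>s1 s2. H (fa_mult s1 (fa_mult (R e) (R b1))) (fa_mult s2 (fa_mult (R f) (R b2))))" for e f b1 b2
    by (rule good_H3[OF H])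
  then have "good (\<lambda>s1 s2. sweedler r (\<lambda>b1 b2. H (fa_mult s1 (fa_mult (R e) (R b1))) (fa_mult s2 (fa_mult (R f) (R b2)))))" for e f
    by (rule good_Sw[where K="\<lambda>b1 b2 s1 s2. H (fa_mult s1 (fa_mult (R e) (R b1))) (fa_mult s2 (fa_mult (R f) (R b2)))"])
  then show ?thesis
    by (rule good_Sw[where K="\<lambda>e f s1 s2. sweedler r (\<lambda>b1 b2. H (fa_mult s1 (fa_mult (R e) (R b1))) (fa_mult s2 (fa_mult (R f) (R b2))))"])
qed

lemma Sw_RRR: assumes H: "good H"
  shows "E (sweedler (fa_mult (R p) (fa_mult (R q) (R r))) H) (sweedler p (\<lambda>a1 a2. sweedler q (\<lambda>e f. sweedler r (\<lambda>b1 b2. H (fa_mult (R a1) (fa_mult (R e) (R b1))) (fa_mult (R a2) (fa_mult (R f) (R b2)))))))"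
proof -
  have e1: "sweedler (fa_mult (R p) (fa_mult (R q) (R r))) H = sweedler (R p) (\<lambda>s1 s2. sweedler (R q) (\<lambda>e f. sweedler (R r) (\<lambda>b1 b2. H (fa_mult s1 (fa_mult e b1)) (fa_mult s2 (fa_mult f b2)))))"
    by (simp only: Sw_mult)
  have e2: "E (sweedler (R p) (\<lambda>s1 s2. sweedler (R q) (\<lambda>e f. sweedler (R r) (\<lambda>b1 b2. H (fa_mult s1 (fa_mult e b1)) (fa_mult s2 (fa_mult f b2)))))) (sweedler (R p) (\<lambda>s1 s2. sweedler (R q) (\<lambda>e f. sweedler r (\<lambda>b1 b2. H (fa_mult s1 (fa_mult e (R b1))) (fa_mult s2 (fa_mult f (R b2)))))))"
  proof (rule E_Sw, rule E_Sw)
    fix s1 s2 e f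
    show "E (sweedler (R r) (\<lambda>b1 b2. H (fa_mult s1 (fa_mult e b1)) (fa_mult s2 (fa_mult f b2))))
        (sweedler r (\<lambda>b1 b2. H (fa_mult s1 (fa_mult e (R b1))) (fa_mult s2 (fa_mult f (R b2)))))"
      by (rule Sw_R[where G="\<lambda>b1 b2. H (fa_mult s1 (fa_mult e b1)) (fa_mult s2 (fa_mult f b2))", OF good_H1[OF H]])
  qed
  have e3: "E (sweedler (R p) (\<lambda>s1 s2. sweedler (R q) (\<lambda>e f. sweedler r (\<lambda>b1 b2. H (fa_mult s1 (fa_mult e (R b1))) (fa_mult s2 (fa_mult f (R b2))))))) (sweedler (R p) (\<lambda>s1 s2. sweedler q (\<lambda>e f. sweedler r (\<lambda>b1 b2. H (fa_mult s1 (fa_mult (R e) (R b1))) (fa_mult s2 (fa_mult (R f) (R b2)))))))"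
  proof (rule E_Sw)
    fix s1 s2
    show "E (sweedler (R q) (\<lambda>e f. sweedler r (\<lambda>b1 b2. H (fa_mult s1 (fa_mult e (R b1))) (fa_mult s2 (fa_mult f (R b2))))))
        (sweedler q (\<lambda>e f. sweedler r (\<lambda>b1 b2. H (fa_mult s1 (fa_mult (R e) (R b1))) (fa_mult s2 (fa_mult (R f) (R b2))))))"
      by (rule Sw_R[where G="\<lambda>e f. sweedler r (\<lambda>b1 b2. H (fa_mult s1 (fa_mult e (R b1))) (fa_mult s2 (fa_mult f (R b2))))", OF good_Sw_H2[OF H]])
  qed
  have e4: "E (sweedler (R p) (\<lambda>s1 s2. sweedler q (\<lambda>e f. sweedler r (\<lambda>b1 b2. H (fa_mult s1 (fa_mult (R e) (R b1))) (fa_mult s2 (fa_mult (R f) (R b2))))))) (sweedler p (\<lambda>a1 a2. sweedler q (\<lambda>e f. sweedler r (\<lambda>b1 b2. H (fa_mult (R a1) (fa_mult (R e) (R b1))) (fa_mult (R a2) (fa_mult (R f) (R b2)))))))"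
    by (rule Sw_R[where G="\<lambda>s1 s2. sweedler q (\<lambda>e f. sweedler r (\<lambda>b1 b2. H (fa_mult s1 (fa_mult (R e) (R b1))) (fa_mult s2 (fa_mult (R f) (R b2)))))", OF good_Sw_Sw_H3[OF H]])
  show ?thesis unfolding e1 by (rule E_trans[OF E_trans[OF e2 e3] e4])
qed

lemma Sw_N: assumes H: "good H"
  shows "E (sweedler (sweedler x (\<lambda>a b. fa_mult (R a) (fa_mult (R y) (R b)))) H) (Sform x y (\<lambda>a1 a2 b1 b2 e f. H (fa_mult (R (fa_word a1)) (fa_mult (R e) (R (fa_word b1)))) (fa_mult (R (fa_word a2)) (fa_mult (R f) (R (fa_word b2))))))"
proof -
  have e1: "sweedler (sweedler x (\<lambda>a b. fa_mult (R a) (fa_mult (R y) (R b)))) H =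
    lin (\<lambda>w. D w (\<lambda>a b. sweedler (fa_mult (R (fa_word a)) (fa_mult (R y) (R (fa_word b)))) H)) x"
    unfolding sweedler_D[of x] Sw_lin_of Sw_D_of by (rule refl)
  have e2: "E (lin (\<lambda>w. D w (\<lambda>a b. sweedler (fa_mult (R (fa_word a)) (fa_mult (R y) (R (fa_word b)))) H)) x)
    (lin (\<lambda>w. D w (\<lambda>a b. D a (\<lambda>a1 a2. sweedler y (\<lambda>e f. D b (\<lambda>b1 b2.
       H (fa_mult (R (fa_word a1)) (fa_mult (R e) (R (fa_word b1)))) (fa_mult (R (fa_word a2)) (fa_mult (R f) (R (fa_word b2))))))))) x)"
  proof (rule E_lin, rule E_D)
    fix w a b
    show "E (sweedler (fa_mult (R (fa_word a)) (fa_mult (R y) (R (fa_word b)))) H)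
      (D a (\<lambda>a1 a2. sweedler y (\<lambda>e f. D b (\<lambda>b1 b2.
       H (fa_mult (R (fa_word a1)) (fa_mult (R e) (R (fa_word b1)))) (fa_mult (R (fa_word a2)) (fa_mult (R f) (R (fa_word b2))))))))"
      using Sw_RRR[OF H, of "fa_word a" y "fa_word b"] by (simp only: Sw_word)
  qed
  have e3: "lin (\<lambda>w. D w (\<lambda>a b. D a (\<lambda>a1 a2. sweedler y (\<lambda>e f. D b (\<lambda>b1 b2.
       H (fa_mult (R (fa_word a1)) (fa_mult (R e) (R (fa_word b1)))) (fa_mult (R (fa_word a2)) (fa_mult (R f) (R (fa_word b2))))))))) x
    = Sform x y (\<lambda>a1 a2 b1 b2 e f. H (fa_mult (R (fa_word a1)) (fa_mult (R e) (R (fa_word b1)))) (fa_mult (R (fa_word a2)) (fa_mult (R f) (R (fa_word b2)))))"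
    unfolding Sform_def D4_def by (simp only: D_Sw lin_Sw)
  show ?thesis using e2 unfolding e1 e3 .
qed

end

context UEA begin

lemma Sw_Sw_of: "sweedler (sweedler y F) G = sweedler y (\<lambda>e f. sweedler (F e f) G)"
  by (rule Sw_hom[OF linmap_Sw])

lemma LHS_form: "sweedler x (\<lambda>u v. star u (star y (star v z))) =
  Sform x y (\<lambda>a b c d e f. fa_mult (R (fa_word a)) (fa_mult (R e) (fa_mult (R (fa_word c)) (fa_mult z
      (fa_mult (R (fa_word d)) (fa_mult (R f) (R (fa_word b))))))))"
  unfolding sweedler_D[of x] Sform_def D4_def ustar_def Sw_word
  by (simp only: M_Sw1 M_Sw2 M_D1 M_D2 D_Sw lin_Sw M_assoc)

lemma good_Gz: "good (\<lambda>s t. fa_mult (fa_mult (R s) z) (R t))"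
proof -
  have "good (\<lambda>s t. fa_mult (fa_mult s z) t)" by (rule good_comp[OF good_M elin_M1 elin_id])
  then show ?thesis by (rule good_comp[OF _ elin_R elin_R])
qed
lemma good_Hz: "good (\<lambda>s t. fa_mult s (fa_mult z t))"
  by (rule good_comp[OF good_M elin_id elin_M2])

lemma Q_eq: "E (star (fa_word u) (star y (fa_word v)))
   (sweedler y (\<lambda>e f. D u (\<lambda>a b. D v (\<lambda>c d. fa_mult (R (fa_word a)) (fa_mult (R e)
      (fa_mult (R (fa_word c)) (fa_mult (R (fa_word d)) (fa_mult (R f) (R (fa_word b))))))))))"
proof -
  have e1: "star (fa_word u) (star y (fa_word v)) =
     sweedler y (\<lambda>e f. D u (\<lambda>a b. fa_mult (R (fa_word a)) (fa_mult (R e) (fa_mult (fa_word v) (fa_mult (R f) (R (fa_word b)))))))"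
    unfolding ustar_def Sw_word
    by (simp only: M_Sw1 M_Sw2 M_D1 M_D2 D_Sw M_assoc)
  have wv: "E (fa_word v) (D v (\<lambda>c d. fa_mult (R (fa_word c)) (R (fa_word d))))"
    using x_RR[of "fa_word v"] by (simp only: Sw_word)
  have e2: "E (sweedler y (\<lambda>e f. D u (\<lambda>a b. fa_mult (R (fa_word a)) (fa_mult (R e) (fa_mult (fa_word v) (fa_mult (R f) (R (fa_word b))))))))
     (sweedler y (\<lambda>e f. D u (\<lambda>a b. fa_mult (R (fa_word a)) (fa_mult (R e) (fa_mult (D v (\<lambda>c d. fa_mult (R (fa_word c)) (R (fa_word d)))) (fa_mult (R f) (R (fa_word b))))))))"
    by (rule E_Sw, rule E_D, rule E_M[OF E_refl], rule E_M[OF E_refl], rule E_M[OF wv E_refl])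
  have e3: "sweedler y (\<lambda>e f. D u (\<lambda>a b. fa_mult (R (fa_word a)) (fa_mult (R e) (fa_mult (D v (\<lambda>c d. fa_mult (R (fa_word c)) (R (fa_word d)))) (fa_mult (R f) (R (fa_word b)))))))
     = sweedler y (\<lambda>e f. D u (\<lambda>a b. D v (\<lambda>c d. fa_mult (R (fa_word a)) (fa_mult (R e)
      (fa_mult (R (fa_word c)) (fa_mult (R (fa_word d)) (fa_mult (R f) (R (fa_word b)))))))))"
    by (simp only: M_D1 M_D2 M_assoc)
  show ?thesis using e2 unfolding e1 e3 .
qed

lemma part1: "E (sweedler x (\<lambda>u v. star u (star y (star v z))))
                (sweedler x (\<lambda>u v. star (star u (star y v)) z))"
proof -
  have s1: "Sform x y (\<lambda>a b c d e f. fa_mult (R (fa_word a)) (fa_mult (R e) (fa_mult (R (fa_word c)) (fa_mult (R (fa_word d)) (fa_mult (R f) (R (fa_word b))))))) = Sform x y (\<lambda>a1 a2 b1 b2 e f. fa_mult (fa_mult (R (fa_word a1)) (fa_mult (R e) (R (fa_word b1)))) (fa_mult (R (fa_word a2)) (fa_mult (R f) (R (fa_word b2)))))"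
    by (subst Sform_swap, rule Sform_cong, simp only: M_assoc)
  have s2: "Sform x y (\<lambda>a b c d e f. fa_mult (R (fa_word a)) (fa_mult (R e) (fa_mult (R (fa_word c)) (fa_mult z (fa_mult (R (fa_word d)) (fa_mult (R f) (R (fa_word b)))))))) = Sform x y (\<lambda>a1 a2 b1 b2 e f. fa_mult (fa_mult (R (fa_word a1)) (fa_mult (R e) (R (fa_word b1)))) (fa_mult z (fa_mult (R (fa_word a2)) (fa_mult (R f) (R (fa_word b2))))))"
    by (subst Sform_swap, rule Sform_cong, simp only: M_assoc)
  have t1: "E (uq (sweedler x (\<lambda>a b. fa_mult (R a) (fa_mult (R y) (R b))))) (Sform x y (\<lambda>a b c d e f. fa_mult (R (fa_word a)) (fa_mult (R e) (fa_mult (R (fa_word c)) (fa_mult (R (fa_word d)) (fa_mult (R f) (R (fa_word b))))))))"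
    unfolding s1 uq_def by (rule Sw_N[OF good_M])
  have t4: "E (sweedler (sweedler x (\<lambda>a b. fa_mult (R a) (fa_mult (R y) (R b)))) (\<lambda>s t. fa_mult s (fa_mult z t))) (Sform x y (\<lambda>a1 a2 b1 b2 e f. fa_mult (fa_mult (R (fa_word a1)) (fa_mult (R e) (R (fa_word b1)))) (fa_mult z (fa_mult (R (fa_word a2)) (fa_mult (R f) (R (fa_word b2)))))))"
    by (rule Sw_N[OF good_Hz])
  have t5: "E (sweedler (sweedler x (\<lambda>a b. fa_mult (R a) (fa_mult (R y) (R b)))) (\<lambda>s t. (\<lambda>s t. fa_mult (fa_mult (R s) z) (R t)) (uq s) (uq t))) (sweedler (sweedler x (\<lambda>a b. fa_mult (R a) (fa_mult (R y) (R b)))) (\<lambda>s t. fa_mult s (fa_mult z t)))"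
  proof (rule E_Sw)
    fix s t
    have "E (fa_mult (fa_mult (R (uq s)) z) (R (uq t))) (fa_mult (fa_mult s z) t)"
      by (rule E_M[OF E_M[OF R_uq E_refl] R_uq])
    then show "E ((\<lambda>s t. fa_mult (fa_mult (R s) z) (R t)) (uq s) (uq t)) (fa_mult s (fa_mult z t))" by (simp only: M_assoc)
  qed
  have t6: "E (sweedler (uq (sweedler x (\<lambda>a b. fa_mult (R a) (fa_mult (R y) (R b))))) (\<lambda>s t. fa_mult (fa_mult (R s) z) (R t))) (sweedler (sweedler x (\<lambda>a b. fa_mult (R a) (fa_mult (R y) (R b)))) (\<lambda>s t. (\<lambda>s t. fa_mult (fa_mult (R s) z) (R t)) (uq s) (uq t)))"
    by (rule Sw_uq[OF good_Gz])
  have t7: "E (sweedler (Sform x y (\<lambda>a b c d e f. fa_mult (R (fa_word a)) (fa_mult (R e) (fa_mult (R (fa_word c)) (fa_mult (R (fa_word d)) (fa_mult (R f) (R (fa_word b)))))))) (\<lambda>s t. fa_mult (fa_mult (R s) z) (R t))) (sweedler (uq (sweedler x (\<lambda>a b. fa_mult (R a) (fa_mult (R y) (R b))))) (\<lambda>s t. fa_mult (fa_mult (R s) z) (R t)))"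
    by (rule Sw_resp[OF E_sym[OF t1] good_Gz])
  have r1: "sweedler x (\<lambda>u v. star (star u (star y v)) z) =
     lin (\<lambda>w. D w (\<lambda>u v. sweedler (star (fa_word u) (star y (fa_word v))) (\<lambda>s t. fa_mult (fa_mult (R s) z) (R t)))) x"
  proof -
    have st: "star P z = sweedler P (\<lambda>s t. fa_mult (fa_mult (R s) z) (R t))" for P by (simp only: ustar_def)
    show ?thesis unfolding st sweedler_D[of x] by (rule refl)
  qed
  have r2: "E (lin (\<lambda>w. D w (\<lambda>u v. sweedler (star (fa_word u) (star y (fa_word v))) (\<lambda>s t. fa_mult (fa_mult (R s) z) (R t)))) x)
     (lin (\<lambda>w. D w (\<lambda>u v. sweedler (sweedler y (\<lambda>e f. D u (\<lambda>a b. D v (\<lambda>c d. fa_mult (R (fa_word a)) (fa_mult (R e)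
      (fa_mult (R (fa_word c)) (fa_mult (R (fa_word d)) (fa_mult (R f) (R (fa_word b)))))))))) (\<lambda>s t. fa_mult (fa_mult (R s) z) (R t)))) x)"
    by (rule E_lin, rule E_D, rule Sw_resp[OF Q_eq good_Gz])
  have r3: "lin (\<lambda>w. D w (\<lambda>u v. sweedler (sweedler y (\<lambda>e f. D u (\<lambda>a b. D v (\<lambda>c d. fa_mult (R (fa_word a)) (fa_mult (R e)
      (fa_mult (R (fa_word c)) (fa_mult (R (fa_word d)) (fa_mult (R f) (R (fa_word b)))))))))) (\<lambda>s t. fa_mult (fa_mult (R s) z) (R t)))) x
     = sweedler (Sform x y (\<lambda>a b c d e f. fa_mult (R (fa_word a)) (fa_mult (R e) (fa_mult (R (fa_word c)) (fa_mult (R (fa_word d)) (fa_mult (R f) (R (fa_word b)))))))) (\<lambda>s t. fa_mult (fa_mult (R s) z) (R t))"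
    unfolding Sform_def D4_def by (simp only: Sw_lin_of Sw_D_of Sw_Sw_of D_Sw lin_Sw)
  have R: "E (sweedler x (\<lambda>u v. star (star u (star y v)) z)) (Sform x y (\<lambda>a1 a2 b1 b2 e f. fa_mult (fa_mult (R (fa_word a1)) (fa_mult (R e) (R (fa_word b1)))) (fa_mult z (fa_mult (R (fa_word a2)) (fa_mult (R f) (R (fa_word b2)))))))"
    using E_trans[OF r2[unfolded r3] E_trans[OF t7 E_trans[OF t6 E_trans[OF t5 t4]]]] unfolding r1 .
  show ?thesis unfolding LHS_form s2 by (rule E_sym[OF R])
qed

end

theorem proposition4p3:
  fixes scale :: "'k::field \<Rightarrow> 'l::ab_group_add \<Rightarrow> 'l" and br :: "'l \<Rightarrow> 'l \<Rightarrow> 'l"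
  assumes "lie_algebra scale br" and "(2::'k) \<noteq> 0"
  shows "(\<forall>x y z. ueq scale br
            (sweedler x (\<lambda>u v. ustar scale br u (ustar scale br y (ustar scale br v z))))
            (sweedler x (\<lambda>u v. ustar scale br (ustar scale br u (ustar scale br y v)) z)))
       \<and> (\<forall>a b. ueq scale br (ustar scale br (fa_gen a) (fa_gen b)) (ustar scale br (fa_gen b) (fa_gen a)))
       \<and> (\<forall>a b c. ueq scale br
            (ustar scale br (fa_gen a) (ustar scale br (fa_gen b) (fa_gen c))
             - ustar scale br (fa_gen b) (ustar scale br (fa_gen a) (fa_gen c)))
            (fa_smult (1/4) (fa_gen (br (br a b) c))))"
proof -
  interpret U: UEA scale br using assms(2) by unfold_locales
  show ?thesis using U.part1 U.part2 U.part3 by blast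
qed

end
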